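(* Let $\mathcal{A}$ and $\mathcal{B}$ be two copies of the same finite-dimensional Hilbert space and $\rho$ a density operator on $\mathcal{A}\otimes\mathcal{B}$. Then the swap test on $\mathcal{A}\otimes\mathcal{B}$ applied to $\rho$ returns the antisymmetric outcome with probability at least $\tfrac12-\tfrac12F(\operatorname{tr}_{\mathcal{A}}\rho,\operatorname{tr}_{\mathcal{B}}\rho)$.
   Context: Let $W$ be the swap operator on $\mathcal{A}\otimes\mathcal{B}$, $W|a\rangle|b\rangle=|b\rangle|a\rangle$. The swap test is the two-outcome projective measurement $\{(\mathbb{1}+W)/2,(\mathbb{1}-W)/2\}$ (projections onto the symmetric and antisymmetric subspaces); the antisymmetric outcome occurs with probability $\operatorname{tr}\big(\tfrac{\mathbb{1}-W}{2}\rho\big)$. Fidelity: $F(\sigma,\xi)=\operatorname{tr}\sqrt{\sqrt\sigma\,\xi\sqrt\sigma}$; the two reduced states $\operatorname{tr}_{\mathcal{A}}\rho$ and $\operatorname{tr}_{\mathcal{B}}\rho$ are regarded as density operators on the same space via the identification of $\mathcal{A}$ and $\mathcal{B}$. *)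

theory Defs
  imports Complex_Main "Jordan_Normal_Form.Matrix"
begin

text \<open>Finite-dimensional Hilbert space C^d; A and B are two copies of it.
  The composite space A (x) B is C^(d*d), basis vector |i>|j> has index i*d+j.\<close>

definition mtrace :: "complex mat \<Rightarrow> complex" where
  "mtrace A = (\<Sum>i<dim_row A. A $$ (i, i))"

definition psd :: "nat \<Rightarrow> complex mat \<Rightarrow> bool" where
  "psd n A \<longleftrightarrow> A \<in> carrier_mat n n
     \<and> (\<forall>i<n. \<forall>j<n. A $$ (i, j) = cnj (A $$ (j, i)))
     \<and> (\<forall>v \<in> carrier_vec n. (A *\<^sub>v v) \<bullet>c v \<in> \<real> \<and> 0 \<le> Re ((A *\<^sub>v v) \<bullet>c v))"

definition density_op :: "nat \<Rightarrow> complex mat \<Rightarrow> bool" where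
  "density_op n \<rho> \<longleftrightarrow> psd n \<rho> \<and> mtrace \<rho> = 1"

definition msqrt :: "nat \<Rightarrow> complex mat \<Rightarrow> complex mat" where
  "msqrt n A = (THE B. psd n B \<and> B * B = A)"

definition fidelity :: "nat \<Rightarrow> complex mat \<Rightarrow> complex mat \<Rightarrow> real" where
  "fidelity n \<sigma> \<xi> = Re (mtrace (msqrt n (msqrt n \<sigma> * \<xi> * msqrt n \<sigma>)))"

definition ptrace_A :: "nat \<Rightarrow> complex mat \<Rightarrow> complex mat" where
  "ptrace_A d \<rho> = mat d d (\<lambda>(i, j). \<Sum>k<d. \<rho> $$ (k * d + i, k * d + j))"

definition ptrace_B :: "nat \<Rightarrow> complex mat \<Rightarrow> complex mat" where
  "ptrace_B d \<rho> = mat d d (\<lambda>(i, j). \<Sum>k<d. \<rho> $$ (i * d + k, j * d + k))"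

text \<open>Swap operator W |a>|b> = |b>|a>.\<close>
definition swap_op :: "nat \<Rightarrow> complex mat" where
  "swap_op d = mat (d * d) (d * d) (\<lambda>(r, c).
      if r div d = c mod d \<and> r mod d = c div d then 1 else 0)"

definition swap_test_antisym_prob :: "nat \<Rightarrow> complex mat \<Rightarrow> real" where
  "swap_test_antisym_prob d \<rho> =
     Re (mtrace ((1 / 2 :: complex) \<cdot>\<^sub>m (1\<^sub>m (d * d) - swap_op d) * \<rho>))"

end

theory Submission imports Defs "Jordan_Normal_Form.Schur_Decomposition" "Jordan_Normal_Form.Spectral_Radius" begin

definition adj :: "complex mat \<Rightarrow> complex mat" where
  "adj A = mat (dim_col A) (dim_row A) (\<lambda>(i,j). cnj (A $$ (j,i)))"

lemma adj_carrier[simp]: "adj A \<in> carrier_mat (dim_col A) (dim_row A)"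
  unfolding adj_def by auto
lemma adj_dims[simp]: "dim_row (adj A) = dim_col A" "dim_col (adj A) = dim_row A"
  unfolding adj_def by auto
lemma adj_index[simp]: "i < dim_col A \<Longrightarrow> j < dim_row A \<Longrightarrow> adj A $$ (i,j) = cnj (A $$ (j,i))"
  unfolding adj_def by auto
lemma adj_carrierI[intro,simp]: "A \<in> carrier_mat n m \<Longrightarrow> adj A \<in> carrier_mat m n"
  by auto
lemma adj_adj[simp]: "adj (adj A) = A"
  by (rule eq_matI, auto)

lemma mult_idx: "i < dim_row A \<Longrightarrow> j < dim_col B \<Longrightarrow> dim_col A = dim_row B \<Longrightarrow>
   (A * B) $$ (i,j) = (\<Sum>k<dim_col A. A $$ (i,k) * B $$ (k,j))"
  by (simp add: scalar_prod_def atLeast0LessThan)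

declare index_mult_mat(1)[simp del]

lemma adj_mult: assumes "A \<in> carrier_mat n m" "B \<in> carrier_mat m k"
  shows "adj (A * B) = adj B * adj A"
  by (rule eq_matI, insert assms, auto simp: mult_idx mult.commute sum_distrib_left)

lemma adj_one[simp]: "adj (1\<^sub>m n) = 1\<^sub>m n"
  by (rule eq_matI, auto)

lemma adj_minus: assumes "A \<in> carrier_mat n m" "B \<in> carrier_mat n m"
  shows "adj (A - B) = adj A - adj B"
  by (rule eq_matI, insert assms, auto)

lemma adj_add: assumes "A \<in> carrier_mat n m" "B \<in> carrier_mat n m"
  shows "adj (A + B) = adj A + adj B"
  by (rule eq_matI, insert assms, auto)

lemma adj_smult: "adj (c \<cdot>\<^sub>m A) = cnj c \<cdot>\<^sub>m adj A"
  by (rule eq_matI, auto)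

lemma mtrace_comm: assumes "A \<in> carrier_mat n m" "B \<in> carrier_mat m n"
  shows "mtrace (A * B) = mtrace (B * A)"
proof -
  have "mtrace (A * B) = (\<Sum>i<n. \<Sum>k<m. A $$ (i,k) * B $$ (k,i))"
    using assms by (simp add: mtrace_def mult_idx)
  also have "\<dots> = (\<Sum>k<m. \<Sum>i<n. B $$ (k,i) * A $$ (i,k))"
    by (subst sum.swap) (simp add: mult.commute)
  also have "\<dots> = mtrace (B * A)"
    using assms by (simp add: mtrace_def mult_idx)
  finally show ?thesis .
qed

lemma mtrace_adj: "A \<in> carrier_mat n n \<Longrightarrow> mtrace (adj A) = cnj (mtrace A)"
  by (simp add: mtrace_def)

lemma mtrace_add: "A \<in> carrier_mat n n \<Longrightarrow> B \<in> carrier_mat n n \<Longrightarrow> mtrace (A + B) = mtrace A + mtrace B"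
  by (simp add: mtrace_def sum.distrib)
lemma mtrace_minus: "A \<in> carrier_mat n n \<Longrightarrow> B \<in> carrier_mat n n \<Longrightarrow> mtrace (A - B) = mtrace A - mtrace B"
  by (simp add: mtrace_def sum_subtractf)
lemma mtrace_smult: "A \<in> carrier_mat n n \<Longrightarrow> mtrace (c \<cdot>\<^sub>m A) = c * mtrace A"
  by (simp add: mtrace_def sum_distrib_left)
lemma mtrace_one: "mtrace (1\<^sub>m n) = of_nat n"
  by (simp add: mtrace_def)

lemma mtrace_AAadj: assumes "A \<in> carrier_mat n m"
  shows "mtrace (A * adj A) = of_real (\<Sum>i<n. \<Sum>k<m. (cmod (A $$ (i,k)))^2)"
  using assms by (simp add: mtrace_def mult_idx complex_norm_square del: of_real_power)

lemma mtrace_AAadj_zero: assumes "A \<in> carrier_mat n m" "mtrace (A * adj A) = 0"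
  shows "A = 0\<^sub>m n m"
proof (rule eq_matI)
  fix i j assume ij: "i < dim_row (0\<^sub>m n m :: complex mat)" "j < dim_col (0\<^sub>m n m :: complex mat)"
  have "complex_of_real (\<Sum>i<n. \<Sum>k<m. (cmod (A $$ (i,k)))^2) = 0"
    using assms mtrace_AAadj[OF assms(1)] by simp
  hence "(\<Sum>i<n. \<Sum>k<m. (cmod (A $$ (i,k)))^2) = 0" by (simp only: of_real_eq_0_iff)
  hence "\<forall>i\<in>{..<n}. (\<Sum>k<m. (cmod (A $$ (i,k)))^2) = 0"
    by (subst (asm) sum_nonneg_eq_0_iff) (auto intro: sum_nonneg)
  hence "(cmod (A $$ (i,j)))^2 = 0" using ij
    by (auto simp: sum_nonneg_eq_0_iff)
  thus "A $$ (i,j) = 0\<^sub>m n m $$ (i,j)" using ij by simp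
qed (insert assms, auto)

lemma herm_nilspec_zero:
  assumes N: "N \<in> carrier_mat n n" and h: "adj N = N"
    and ev: "\<And>\<mu>. eigenvalue N \<mu> \<Longrightarrow> \<mu> = 0"
  shows "N = 0\<^sub>m n n"
proof -
  obtain es where cp: "char_poly N = (\<Prod>a\<leftarrow>es. [:- a, 1:])"
    using char_poly_factorized[OF N] by auto
  obtain B P Q where sd: "schur_decomposition N es = (B,P,Q)"
    by (cases "schur_decomposition N es") auto
  from schur_decomposition[OF N cp sd]
  have sim: "similar_mat_wit N B P Q" and ut: "upper_triangular B" and dg: "diag_mat B = es" by auto
  from sim N have BPQ: "B \<in> carrier_mat n n" "P \<in> carrier_mat n n" "Q \<in> carrier_mat n n"
    and PQ: "P * Q = 1\<^sub>m n" and QP: "Q * P = 1\<^sub>m n" and NPBQ: "N = P * B * Q"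
    unfolding similar_mat_wit_def Let_def by auto
  have es0: "e = 0" if "e \<in> set es" for e
  proof -
    have "poly (char_poly N) e = 0" unfolding cp poly_prod_list
      using that by (auto simp: prod_list_zero_iff)
    hence "eigenvalue N e" using eigenvalue_root_char_poly[OF N] by simp
    thus ?thesis by (rule ev)
  qed
  have Bz: "B $$ (i,j) = 0" if "i < n" "j < n" "j \<le> i" for i j
  proof (cases "j = i")
    case True
    have "B $$ (i,i) \<in> set es" using dg[symmetric] that BPQ unfolding diag_mat_def by auto
    thus ?thesis using es0 True by auto
  next
    case False
    thus ?thesis using ut that BPQ unfolding upper_triangular_def by auto
  qed
  have trBB: "mtrace (B * B) = 0"
    using BPQ unfolding mtrace_def
    by (auto simp: mult_idx intro!: sum.neutral) (metis Bz linorder_le_cases mult_eq_0_iff)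
  have QPX: "Q * (P * X) = X" if "X \<in> carrier_mat n n" for X
    using that BPQ by (simp add: assoc_mult_mat[symmetric, of Q n n P n X n] QP)
  have "N * N = P * (B * B) * Q"
    unfolding NPBQ using BPQ
    by (simp add: assoc_mult_mat[of _ n n _ n _ n] QPX)
  hence "mtrace (N * N) = mtrace (Q * (P * (B * B)))"
    using BPQ by (metis mtrace_comm mult_carrier_mat)
  also have "\<dots> = 0" using QPX BPQ trBB by simp
  finally have "mtrace (N * adj N) = 0" using h by simp
  from mtrace_AAadj_zero[OF N this] show ?thesis .
qed

lemma mv_idx: "i < dim_row A \<Longrightarrow> dim_vec v = dim_col A \<Longrightarrow> (A *\<^sub>v v) $ i = (\<Sum>j<dim_col A. A $$ (i,j) * v $ j)"
  by (simp add: scalar_prod_def atLeast0LessThan)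

declare index_mult_mat_vec[simp del]

lemma ip_def': "dim_vec v = n \<Longrightarrow> u \<bullet>c v = (\<Sum>i<n. u $ i * cnj (v $ i))"
  by (simp add: scalar_prod_def atLeast0LessThan)

lemma ip_cnj: "u \<in> carrier_vec n \<Longrightarrow> v \<in> carrier_vec n \<Longrightarrow> v \<bullet>c u = cnj (u \<bullet>c v)"
  by (simp add: ip_def' mult.commute)

lemma ip_adj: assumes A: "A \<in> carrier_mat n n" and u: "u \<in> carrier_vec n" and v: "v \<in> carrier_vec n"
  shows "(A *\<^sub>v u) \<bullet>c v = u \<bullet>c (adj A *\<^sub>v v)"
proof -
  have "(A *\<^sub>v u) \<bullet>c v = (\<Sum>i<n. (\<Sum>j<n. A $$ (i,j) * u $ j) * cnj (v $ i))"
    using assms by (simp add: ip_def' mv_idx)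
  also have "\<dots> = (\<Sum>j<n. u $ j * cnj (\<Sum>i<n. cnj (A $$ (i,j)) * v $ i))"
    by (simp add: sum_distrib_left sum_distrib_right mult_ac) (rule sum.swap)
  also have "\<dots> = u \<bullet>c (adj A *\<^sub>v v)"
    using assms by (simp add: ip_def' mv_idx)
  finally show ?thesis .
qed

lemma ip_smult_left: "v \<in> carrier_vec n \<Longrightarrow> u \<in> carrier_vec n \<Longrightarrow> (c \<cdot>\<^sub>v u) \<bullet>c v = c * (u \<bullet>c v)"
  by (simp add: ip_def' sum_distrib_left mult_ac)
lemma ip_smult_right: "v \<in> carrier_vec n \<Longrightarrow> u \<in> carrier_vec n \<Longrightarrow> u \<bullet>c (c \<cdot>\<^sub>v v) = cnj c * (u \<bullet>c v)"
  by (simp add: ip_def' sum_distrib_left mult_ac)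

lemma ip_self_real: "v \<in> carrier_vec n \<Longrightarrow> v \<bullet>c v = of_real (\<Sum>i<n. (cmod (v $ i))^2)"
  by (simp add: ip_def' complex_norm_square del: of_real_power)

lemma ip_self_zero: assumes "(v :: complex vec) \<in> carrier_vec n" "v \<bullet>c v = 0" shows "v = 0\<^sub>v n"
proof (rule eq_vecI)
  fix i assume i: "i < dim_vec (0\<^sub>v n :: complex vec)"
  have "complex_of_real (\<Sum>i<n. (cmod (v $ i))^2) = 0" using ip_self_real[OF assms(1)] assms(2) by simp
  hence "(\<Sum>i<n. (cmod (v $ i))^2) = 0" by (simp only: of_real_eq_0_iff)
  hence "(cmod (v $ i))^2 = 0" using i by (simp add: sum_nonneg_eq_0_iff)
  thus "v $ i = 0\<^sub>v n $ i" using i by simp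
qed (insert assms, auto)

definition dmat :: "nat \<Rightarrow> (nat \<Rightarrow> real) \<Rightarrow> complex mat" where
  "dmat n f = mat n n (\<lambda>(i,j). if i = j then complex_of_real (f i) else 0)"

lemma dmat_carrier[simp]: "dmat n f \<in> carrier_mat n n" by (simp add: dmat_def)
lemma dmat_dims[simp]: "dim_row (dmat n f) = n" "dim_col (dmat n f) = n" by (simp_all add: dmat_def)
lemma dmat_idx[simp]: "i < n \<Longrightarrow> j < n \<Longrightarrow> dmat n f $$ (i,j) = (if i = j then complex_of_real (f i) else 0)"
  by (simp add: dmat_def)

definition ON :: "nat \<Rightarrow> complex vec list \<Rightarrow> bool" where
  "ON n vs \<longleftrightarrow> (\<forall>v\<in>set vs. v \<in> carrier_vec n) \<and>
     (\<forall>i<length vs. \<forall>j<length vs. vs ! i \<bullet>c vs ! j = (if i = j then 1 else 0))"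

lemma spectral_step:
  assumes A: "A \<in> carrier_mat n n" and h: "adj A = A"
    and on: "ON n vs" and k: "length vs < n"
    and eig: "\<And>i. i < length vs \<Longrightarrow> A *\<^sub>v (vs ! i) = complex_of_real (lam i) \<cdot>\<^sub>v (vs ! i)"
  shows "\<exists>y r. y \<in> carrier_vec n \<and> y \<noteq> 0\<^sub>v n \<and> (\<forall>j<length vs. y \<bullet>c vs ! j = 0)
     \<and> A *\<^sub>v y = complex_of_real r \<cdot>\<^sub>v y"
proof -
  define k where "k = length vs"
  have vc: "vs ! i \<in> carrier_vec n" if "i < k" for i using on that unfolding ON_def k_def by auto
  have vo: "vs ! i \<bullet>c vs ! j = (if i = j then 1 else 0)" if "i < k" "j < k" for i j
    using on that unfolding ON_def k_def by auto
  have vd: "dim_vec (vs ! i) = n" if "i < k" for i using vc[OF that] by auto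
  define P where "P = mat n n (\<lambda>(a,b). (if a = b then 1 else 0) - (\<Sum>i<k. vs ! i $ a * cnj (vs ! i $ b)))"
  have Pc: "P \<in> carrier_mat n n" unfolding P_def by auto
  have Pv: "(P *\<^sub>v x) $ a = x $ a - (\<Sum>i<k. vs ! i $ a * (x \<bullet>c vs ! i))"
    if x: "x \<in> carrier_vec n" and a: "a < n" for x a
  proof -
    have "(P *\<^sub>v x) $ a = (\<Sum>b<n. ((if a = b then 1 else 0) - (\<Sum>i<k. vs ! i $ a * cnj (vs ! i $ b))) * x $ b)"
      using x a Pc by (simp add: mv_idx P_def)
    also have "\<dots> = (\<Sum>b<n. (if a = b then 1 else 0) * x $ b) - (\<Sum>b<n. (\<Sum>i<k. vs ! i $ a * cnj (vs ! i $ b)) * x $ b)"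
      by (simp only: left_diff_distrib sum_subtractf)
    also have "(\<Sum>b<n. (if a = b then 1 else 0) * x $ b) = x $ a"
    proof -
      have "(\<Sum>b<n. (if a = b then 1 else 0) * x $ b) = (\<Sum>b<n. if a = b then x $ b else 0)"
        by (rule sum.cong) auto
      also have "\<dots> = x $ a" using a by simp
      finally show ?thesis .
    qed
    also have "(\<Sum>b<n. (\<Sum>i<k. vs ! i $ a * cnj (vs ! i $ b)) * x $ b) = (\<Sum>i<k. vs ! i $ a * (x \<bullet>c vs ! i))"
    proof -
      have "(\<Sum>b<n. (\<Sum>i<k. vs ! i $ a * cnj (vs ! i $ b)) * x $ b) = (\<Sum>b<n. \<Sum>i<k. vs ! i $ a * cnj (vs ! i $ b) * x $ b)"
        by (simp add: sum_distrib_right)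
      also have "\<dots> = (\<Sum>i<k. \<Sum>b<n. vs ! i $ a * cnj (vs ! i $ b) * x $ b)" by (rule sum.swap)
      also have "\<dots> = (\<Sum>i<k. vs ! i $ a * (x \<bullet>c vs ! i))"
      proof (rule sum.cong[OF refl])
        fix i assume "i \<in> {..<k}"
        hence "x \<bullet>c vs ! i = (\<Sum>b<n. x $ b * cnj (vs ! i $ b))" using ip_def'[OF vd] by simp
        thus "(\<Sum>b<n. vs ! i $ a * cnj (vs ! i $ b) * x $ b) = vs ! i $ a * (x \<bullet>c vs ! i)"
          by (simp only: sum_distrib_left) (rule sum.cong, simp_all add: ac_simps)
      qed
      finally show ?thesis .
    qed
    finally show ?thesis .
  qed
  have Pvc: "P *\<^sub>v x \<in> carrier_vec n" if "x \<in> carrier_vec n" for x using Pc that by auto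
  have P1: "(P *\<^sub>v x) \<bullet>c vs ! j = 0" if x: "x \<in> carrier_vec n" and j: "j < k" for x j
  proof -
    have "(P *\<^sub>v x) \<bullet>c vs ! j = (\<Sum>a<n. (x $ a - (\<Sum>i<k. vs ! i $ a * (x \<bullet>c vs ! i))) * cnj (vs ! j $ a))"
      using vc[OF j] Pv[OF x] by (simp add: ip_def')
    also have "\<dots> = x \<bullet>c vs ! j - (\<Sum>i<k. (x \<bullet>c vs ! i) * (vs ! i \<bullet>c vs ! j))"
    proof -
      have "(\<Sum>a<n. (x $ a - (\<Sum>i<k. vs ! i $ a * (x \<bullet>c vs ! i))) * cnj (vs ! j $ a))
         = (\<Sum>a<n. x $ a * cnj (vs ! j $ a)) - (\<Sum>a<n. \<Sum>i<k. vs ! i $ a * (x \<bullet>c vs ! i) * cnj (vs ! j $ a))"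
        by (simp only: left_diff_distrib sum_subtractf sum_distrib_right)
      also have "(\<Sum>a<n. x $ a * cnj (vs ! j $ a)) = x \<bullet>c vs ! j" using ip_def'[OF vd[OF j]] by simp
      also have "(\<Sum>a<n. \<Sum>i<k. vs ! i $ a * (x \<bullet>c vs ! i) * cnj (vs ! j $ a))
         = (\<Sum>i<k. \<Sum>a<n. vs ! i $ a * (x \<bullet>c vs ! i) * cnj (vs ! j $ a))" by (rule sum.swap)
      also have "\<dots> = (\<Sum>i<k. (x \<bullet>c vs ! i) * (vs ! i \<bullet>c vs ! j))"
      proof (rule sum.cong[OF refl])
        fix i assume "i \<in> {..<k}"
        have "vs ! i \<bullet>c vs ! j = (\<Sum>a<n. vs ! i $ a * cnj (vs ! j $ a))" using ip_def'[OF vd[OF j]] by simp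
        thus "(\<Sum>a<n. vs ! i $ a * (x \<bullet>c vs ! i) * cnj (vs ! j $ a)) = (x \<bullet>c vs ! i) * (vs ! i \<bullet>c vs ! j)"
          by (simp only: sum_distrib_left) (rule sum.cong, simp_all add: ac_simps)
      qed
      finally show ?thesis .
    qed
    also have "\<dots> = 0" using j by (simp add: vo if_distrib sum.delta cong: if_cong)
    finally show ?thesis .
  qed
  have P2: "P *\<^sub>v y = y" if y: "y \<in> carrier_vec n" and yo: "\<forall>j<k. y \<bullet>c vs ! j = 0" for y
    by (rule eq_vecI, insert y yo Pc, auto simp: Pv)
  have P3: "(A *\<^sub>v y) \<bullet>c vs ! j = 0" if y: "y \<in> carrier_vec n" and yo: "\<forall>j<k. y \<bullet>c vs ! j = 0"
    and j: "j < k" for y j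
  proof -
    have "(A *\<^sub>v y) \<bullet>c vs ! j = y \<bullet>c (A *\<^sub>v vs ! j)"
      using ip_adj[OF A y vc[OF j]] h by simp
    also have "\<dots> = 0" using eig[of j] j yo y vc[OF j] unfolding k_def
      by (simp add: ip_smult_right)
    finally show ?thesis .
  qed
  define N where "N = P * A * P"
  have Nc: "N \<in> carrier_mat n n" unfolding N_def using Pc A by auto
  have hP: "adj P = P" by (rule eq_matI) (auto simp: P_def cnj_sum mult.commute)
  have hN: "adj N = N" unfolding N_def using Pc A hP h
    by (simp add: adj_mult[of _ n n _ n] assoc_mult_mat[of _ n n _ n _ n])
  have NvA: "N *\<^sub>v y = A *\<^sub>v y" if y: "y \<in> carrier_vec n" and yo: "\<forall>j<k. y \<bullet>c vs ! j = 0" for y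
  proof -
    have "N *\<^sub>v y = P *\<^sub>v (A *\<^sub>v (P *\<^sub>v y))" unfolding N_def using Pc A y
      by (simp add: assoc_mult_mat_vec[of _ n n _ n])
    also have "\<dots> = A *\<^sub>v y" using P2[OF y yo] P2[of "A *\<^sub>v y"] P3[OF y yo] A y by auto
    finally show ?thesis .
  qed
  show ?thesis
  proof (cases "N = 0\<^sub>m n n")
    case True
    have trP: "mtrace P = of_nat n - of_nat k"
    proof -
      have e1: "mtrace P = (\<Sum>a<n. 1 - (\<Sum>i<k. vs ! i $ a * cnj (vs ! i $ a)))"
        unfolding mtrace_def P_def by simp
      have e2: "(\<Sum>a<n. 1 - (\<Sum>i<k. vs ! i $ a * cnj (vs ! i $ a))) = of_nat n - (\<Sum>a<n. \<Sum>i<k. vs ! i $ a * cnj (vs ! i $ a))"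
        by (simp add: sum_subtractf)
      have e3: "(\<Sum>a<n. \<Sum>i<k. vs ! i $ a * cnj (vs ! i $ a)) = (\<Sum>i<k. \<Sum>a<n. vs ! i $ a * cnj (vs ! i $ a))"
        by (rule sum.swap)
      have e4: "(\<Sum>i<k. \<Sum>a<n. vs ! i $ a * cnj (vs ! i $ a)) = (\<Sum>i<k. vs ! i \<bullet>c vs ! i)"
        by (rule sum.cong[OF refl]) (simp add: ip_def'[OF vd])
      have e5: "(\<Sum>i<k. vs ! i \<bullet>c vs ! i) = of_nat k" by (simp add: vo)
      show ?thesis using e1 e2 e3 e4 e5 by simp
    qed
    have "mtrace P \<noteq> 0" using trP k unfolding k_def by simp
    have "\<exists>a<n. P $$ (a,a) \<noteq> 0"
    proof (rule ccontr)
      assume "\<not> (\<exists>a<n. P $$ (a,a) \<noteq> 0)"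
      hence "mtrace P = 0" using Pc unfolding mtrace_def by (auto intro: sum.neutral)
      thus False using \<open>mtrace P \<noteq> 0\<close> by simp
    qed
    then obtain a where a: "a < n" "P $$ (a,a) \<noteq> 0" by blast
    define y where "y = P *\<^sub>v unit_vec n a"
    have yc: "y \<in> carrier_vec n" unfolding y_def using Pvc by simp
    have ya: "y $ a = P $$ (a,a)" unfolding y_def using a Pc
      by (simp add: mv_idx unit_vec_def if_distrib sum.delta cong: if_cong)
    have yo: "\<forall>j<k. y \<bullet>c vs ! j = 0" unfolding y_def using P1 by auto
    have y0: "y \<noteq> 0\<^sub>v n" using ya a by auto
    have "A *\<^sub>v y = N *\<^sub>v y" using NvA[OF yc yo] by simp
    also have "\<dots> = complex_of_real 0 \<cdot>\<^sub>v y" using True yc by (intro eq_vecI) (auto simp: mv_idx)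
    finally show ?thesis using yc y0 yo unfolding k_def by blast
  next
    case False
    have "\<exists>\<mu>. eigenvalue N \<mu> \<and> \<mu> \<noteq> 0"
      using herm_nilspec_zero[OF Nc hN] False by blast
    then obtain \<mu> w where ew: "eigenvector N w \<mu>" and mu0: "\<mu> \<noteq> 0"
      unfolding eigenvalue_def by auto
    have wc: "w \<in> carrier_vec n" and w0: "w \<noteq> 0\<^sub>v n" and Nw: "N *\<^sub>v w = \<mu> \<cdot>\<^sub>v w"
      using ew Nc unfolding eigenvector_def by auto
    have "w = (1/\<mu>) \<cdot>\<^sub>v (N *\<^sub>v w)" using Nw mu0 wc by (auto simp: smult_smult_assoc)
    also have "\<dots> = P *\<^sub>v ((1/\<mu>) \<cdot>\<^sub>v (A *\<^sub>v (P *\<^sub>v w)))"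
      unfolding N_def using Pc A wc
      by (simp add: assoc_mult_mat_vec[of _ n n _ n] mult_mat_vec[of _ n n])
    finally have wP: "w = P *\<^sub>v ((1/\<mu>) \<cdot>\<^sub>v (A *\<^sub>v (P *\<^sub>v w)))" .
    have "(1/\<mu>) \<cdot>\<^sub>v (A *\<^sub>v (P *\<^sub>v w)) \<in> carrier_vec n" using A wc Pvc by simp
    hence wo: "\<forall>j<k. w \<bullet>c vs ! j = 0" using P1 wP by metis
    have Aw: "A *\<^sub>v w = \<mu> \<cdot>\<^sub>v w" using NvA[OF wc wo] Nw by simp
    have ww: "w \<bullet>c w \<noteq> 0" using ip_self_zero[OF wc] w0 by auto
    have "\<mu> * (w \<bullet>c w) = (A *\<^sub>v w) \<bullet>c w" using Aw wc by (simp add: ip_smult_left)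
    also have "\<dots> = w \<bullet>c (A *\<^sub>v w)" using ip_adj[OF A wc wc] h by simp
    also have "\<dots> = cnj \<mu> * (w \<bullet>c w)" using Aw wc by (simp add: ip_smult_right)
    finally have "\<mu> = cnj \<mu>" using ww by simp
    hence "Im \<mu> = 0" by (metis cnj.simps(2) neg_equal_zero)
    hence "\<mu> = complex_of_real (Re \<mu>)" by (simp add: complex_eq_iff)
    hence "A *\<^sub>v w = complex_of_real (Re \<mu>) \<cdot>\<^sub>v w" using Aw by simp
    thus ?thesis using wc w0 wo unfolding k_def by blast
  qed
qed

lemma spectral_list:
  assumes A: "A \<in> carrier_mat n n" and h: "adj A = A"
  shows "k \<le> n \<Longrightarrow> \<exists>vs lam. length vs = k \<and> ON n vs \<and>
     (\<forall>i<k. A *\<^sub>v (vs ! i) = complex_of_real (lam i) \<cdot>\<^sub>v (vs ! i))"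
proof (induction k)
  case 0
  show ?case by (intro exI[of _ "[]"]) (auto simp: ON_def)
next
  case (Suc k)
  then obtain vs lam where len: "length vs = k" and on: "ON n vs"
    and eig: "\<forall>i<k. A *\<^sub>v (vs ! i) = complex_of_real (lam i) \<cdot>\<^sub>v (vs ! i)" by auto
  have "length vs < n" using Suc len by simp
  from spectral_step[OF A h on this, of lam] eig len
  obtain y r where yc: "y \<in> carrier_vec n" and y0: "y \<noteq> 0\<^sub>v n"
    and yo: "\<forall>j<length vs. y \<bullet>c vs ! j = 0" and Ay: "A *\<^sub>v y = complex_of_real r \<cdot>\<^sub>v y" by auto
  define s where "s = (\<Sum>i<n. (cmod (y $ i))^2)"
  have ys: "y \<bullet>c y = complex_of_real s" using ip_self_real[OF yc] s_def by simp
  have s0: "s \<noteq> 0" using ys ip_self_zero[OF yc] y0 by auto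
  have sp: "s > 0" using s0 unfolding s_def by (simp add: sum_nonneg order_le_neq_trans)
  define c where "c = 1 / sqrt s"
  define u where "u = complex_of_real c \<cdot>\<^sub>v y"
  have uc: "u \<in> carrier_vec n" using yc unfolding u_def by simp
  have uu: "u \<bullet>c u = 1"
    unfolding u_def using yc sp
    by (simp add: ip_smult_left ip_smult_right ys c_def) (metis of_real_1 of_real_mult real_sqrt_pow2 less_imp_le power2_eq_square divide_self_if s0 times_divide_eq_left mult_1)
  have vc: "vs ! j \<in> carrier_vec n" if "j < k" for j using on that len unfolding ON_def by auto
  have uo: "u \<bullet>c vs ! j = 0" if "j < k" for j
    unfolding u_def using yc vc[OF that] yo that len by (simp add: ip_smult_left)
  have ou: "vs ! j \<bullet>c u = 0" if "j < k" for j
    using ip_cnj[OF uc vc[OF that]] uo[OF that] by simp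
  have Au: "A *\<^sub>v u = complex_of_real r \<cdot>\<^sub>v u"
    unfolding u_def using A yc Ay by (simp add: mult_mat_vec smult_smult_assoc mult.commute)
  show ?case
  proof (intro exI[of _ "vs @ [u]"] exI[of _ "lam(k := r)"] conjI)
    show "length (vs @ [u]) = Suc k" using len by simp
    show "ON n (vs @ [u])" using on uc uu uo ou len unfolding ON_def
      by (auto simp: nth_append less_Suc_eq)
    show "\<forall>i<Suc k. A *\<^sub>v (vs @ [u]) ! i = complex_of_real ((lam(k := r)) i) \<cdot>\<^sub>v (vs @ [u]) ! i"
      using eig Au len by (auto simp: nth_append less_Suc_eq)
  qed
qed

theorem spectral:
  assumes A: "A \<in> carrier_mat n n" and h: "adj A = A"
  shows "\<exists>U lam. U \<in> carrier_mat n n \<and> adj U * U = 1\<^sub>m n \<and> U * adj U = 1\<^sub>m n \<and>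
     A = U * dmat n lam * adj U"
proof -
  obtain vs lam where len: "length vs = n" and on: "ON n vs"
    and eig: "\<forall>i<n. A *\<^sub>v (vs ! i) = complex_of_real (lam i) \<cdot>\<^sub>v (vs ! i)"
    using spectral_list[OF A h, of n] by auto
  have vc: "vs ! j \<in> carrier_vec n" if "j < n" for j using on that len unfolding ON_def by auto
  have vo: "vs ! i \<bullet>c vs ! j = (if i = j then 1 else 0)" if "i < n" "j < n" for i j
    using on that len unfolding ON_def by auto
  define U where "U = mat n n (\<lambda>(a,i). vs ! i $ a)"
  have Uc: "U \<in> carrier_mat n n" unfolding U_def by simp
  have UU: "adj U * U = 1\<^sub>m n"
  proof (rule eq_matI)
    fix i j assume ij: "i < dim_row (1\<^sub>m n :: complex mat)" "j < dim_col (1\<^sub>m n :: complex mat)"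
    have "(adj U * U) $$ (i,j) = (\<Sum>a<n. cnj (vs ! i $ a) * vs ! j $ a)"
      using ij Uc by (simp add: mult_idx U_def)
    also have "\<dots> = vs ! j \<bullet>c vs ! i" using vc[of i] ij by (subst ip_def'[of _ n]) (auto simp: mult.commute)
    also have "\<dots> = 1\<^sub>m n $$ (i,j)" using vo ij by auto
    finally show "(adj U * U) $$ (i,j) = 1\<^sub>m n $$ (i,j)" .
  qed (insert Uc, auto)
  have UU': "U * adj U = 1\<^sub>m n" using mat_mult_left_right_inverse[OF _ Uc UU] Uc by simp
  have AU: "A * U = U * dmat n lam"
  proof (rule eq_matI)
    fix a i assume ai: "a < dim_row (U * dmat n lam)" "i < dim_col (U * dmat n lam)"
    hence ai': "a < n" "i < n" using Uc by auto
    have "(A * U) $$ (a,i) = (A *\<^sub>v vs ! i) $ a"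
      using ai' A Uc vc by (simp add: mult_idx mv_idx U_def)
    also have "\<dots> = complex_of_real (lam i) * vs ! i $ a" using eig ai' vc[of i] by (simp add: carrier_vecD)
    also have "\<dots> = (U * dmat n lam) $$ (a,i)"
      using ai' Uc by (simp add: mult_idx U_def if_distrib sum.delta cong: if_cong)
    finally show "(A * U) $$ (a,i) = (U * dmat n lam) $$ (a,i)" .
  qed (insert A Uc, auto)
  have "A = A * (U * adj U)" using UU' A by simp
  also have "\<dots> = A * U * adj U" using A Uc by (simp add: assoc_mult_mat[of _ n n _ n _ n])
  also have "\<dots> = U * dmat n lam * adj U" using AU by simp
  finally show ?thesis using Uc UU UU' by blast
qed

lemma ip_minus_left: fixes u w v :: "complex vec" shows "u \<in> carrier_vec n \<Longrightarrow> w \<in> carrier_vec n \<Longrightarrow> v \<in> carrier_vec n \<Longrightarrow>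
  (u - w) \<bullet>c v = u \<bullet>c v - w \<bullet>c v"
  by (simp add: ip_def'[of v n] sum_subtractf left_diff_distrib)
lemma ip_minus_right: fixes u w v :: "complex vec" shows "u \<in> carrier_vec n \<Longrightarrow> w \<in> carrier_vec n \<Longrightarrow> v \<in> carrier_vec n \<Longrightarrow>
  v \<bullet>c (u - w) = v \<bullet>c u - v \<bullet>c w"
  by (simp add: ip_def'[of u n] ip_def'[of w n] ip_def'[of "u - w" n] sum_subtractf right_diff_distrib)

lemma ip_adj_rect: assumes A: "A \<in> carrier_mat n m" and u: "u \<in> carrier_vec m" and v: "v \<in> carrier_vec n"
  shows "(A *\<^sub>v u) \<bullet>c v = u \<bullet>c (adj A *\<^sub>v v)"
proof -
  have "(A *\<^sub>v u) \<bullet>c v = (\<Sum>i<n. (\<Sum>j<m. A $$ (i,j) * u $ j) * cnj (v $ i))"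
    using assms by (simp add: ip_def' mv_idx)
  also have "\<dots> = (\<Sum>j<m. u $ j * cnj (\<Sum>i<n. cnj (A $$ (i,j)) * v $ i))"
    by (simp add: sum_distrib_left sum_distrib_right mult_ac) (rule sum.swap)
  also have "\<dots> = u \<bullet>c (adj A *\<^sub>v v)"
    using assms by (simp add: ip_def' mv_idx)
  finally show ?thesis .
qed

lemma psd_carrier: "psd n A \<Longrightarrow> A \<in> carrier_mat n n"
  unfolding psd_def by (rule conjunct1)

lemma psd_entries: "psd n A \<Longrightarrow> \<forall>i<n. \<forall>j<n. A $$ (i, j) = cnj (A $$ (j, i))"
  unfolding psd_def by (drule conjunct2, rule conjunct1)

lemma psd_herm: assumes "psd n A" shows "adj A = A"
proof -
  note c = psd_carrier[OF assms] and e = psd_entries[OF assms]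
  show ?thesis
  proof (rule eq_matI)
    fix i j assume "i < dim_row A" "j < dim_col A"
    thus "adj A $$ (i,j) = A $$ (i,j)" using c e by (metis adj_index carrier_matD complex_cnj_cnj)
  qed (insert c, auto)
qed

lemma psd_forms: "psd n A \<Longrightarrow> \<forall>v \<in> carrier_vec n. (A *\<^sub>v v) \<bullet>c v \<in> \<real> \<and> 0 \<le> Re ((A *\<^sub>v v) \<bullet>c v)"
  unfolding psd_def by (drule conjunct2, drule conjunct2)

lemma psd_form: assumes "psd n A" "v \<in> carrier_vec n"
  shows "(A *\<^sub>v v) \<bullet>c v = complex_of_real (Re ((A *\<^sub>v v) \<bullet>c v)) \<and> 0 \<le> Re ((A *\<^sub>v v) \<bullet>c v)"
proof -
  have r: "(A *\<^sub>v v) \<bullet>c v \<in> \<real>" and p: "0 \<le> Re ((A *\<^sub>v v) \<bullet>c v)"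
    using psd_forms[OF assms(1)] assms(2) by auto
  from r have "Im ((A *\<^sub>v v) \<bullet>c v) = 0" by (simp only: complex_is_Real_iff)
  hence "(A *\<^sub>v v) \<bullet>c v = complex_of_real (Re ((A *\<^sub>v v) \<bullet>c v))" by (simp only: complex_eq_iff Re_complex_of_real Im_complex_of_real)
  thus ?thesis using p by blast
qed

lemma psdI: assumes "A \<in> carrier_mat n n" "adj A = A"
  "\<And>v. v \<in> carrier_vec n \<Longrightarrow> Im ((A *\<^sub>v v) \<bullet>c v) = 0 \<and> 0 \<le> Re ((A *\<^sub>v v) \<bullet>c v)"
  shows "psd n A"
proof -
  have e: "\<forall>i<n. \<forall>j<n. A $$ (i,j) = cnj (A $$ (j,i))"
  proof (intro allI impI)
    fix i j assume "i < n" "j < n"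
    hence "adj A $$ (i,j) = cnj (A $$ (j,i))" using assms(1) by simp
    thus "A $$ (i,j) = cnj (A $$ (j,i))" using assms(2) by simp
  qed
  have f: "\<forall>v \<in> carrier_vec n. (A *\<^sub>v v) \<bullet>c v \<in> \<real> \<and> 0 \<le> Re ((A *\<^sub>v v) \<bullet>c v)"
    using assms(3) complex_is_Real_iff by blast
  show ?thesis unfolding psd_def using assms(1) e f by (intro conjI)
qed

lemma psd_congr: assumes D: "psd m D" and V: "V \<in> carrier_mat n m"
  shows "psd n (V * D * adj V)"
proof (rule psdI)
  have Dc: "D \<in> carrier_mat m m" using psd_carrier[OF D] .
  show "V * D * adj V \<in> carrier_mat n n" using Dc V by auto
  show "adj (V * D * adj V) = V * D * adj V"
  proof -
    have "adj (V * D * adj V) = adj (adj V) * adj (V * D)" using Dc V by (intro adj_mult) auto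
    also have "adj (V * D) = adj D * adj V" using Dc V by (intro adj_mult) auto
    finally show ?thesis using Dc V psd_herm[OF D] by (simp add: assoc_mult_mat[of _ n m _ m _ n])
  qed
  fix v :: "complex vec" assume v: "v \<in> carrier_vec n"
  have w: "adj V *\<^sub>v v \<in> carrier_vec m" using mult_mat_vec_carrier[OF adj_carrierI[OF V] v] .
  have "(V * D * adj V *\<^sub>v v) \<bullet>c v = (V *\<^sub>v (D *\<^sub>v (adj V *\<^sub>v v))) \<bullet>c v"
    using Dc V v w by (simp add: assoc_mult_mat_vec[of _ n m _ n] assoc_mult_mat_vec[of _ n m _ m])
  also have "\<dots> = (D *\<^sub>v (adj V *\<^sub>v v)) \<bullet>c (adj V *\<^sub>v v)"
    by (rule ip_adj_rect[OF V _ v]) (insert Dc w, auto)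
  finally have eq: "(V * D * adj V *\<^sub>v v) \<bullet>c v = (D *\<^sub>v (adj V *\<^sub>v v)) \<bullet>c (adj V *\<^sub>v v)" .
  from psd_form[OF D w] show "Im ((V * D * adj V *\<^sub>v v) \<bullet>c v) = 0 \<and> 0 \<le> Re ((V * D * adj V *\<^sub>v v) \<bullet>c v)"
    unfolding eq by (metis Im_complex_of_real)
qed

lemma sum_delta_l: fixes c b :: "nat \<Rightarrow> complex" shows "(\<Sum>j<n. (if i = j then c j else 0) * b j) = (if i < n then c i * b i else 0)"
proof -
  have eq: "(\<lambda>j. (if i = j then c j else 0) * b j) = (\<lambda>j. if i = j then c j * b j else 0)" by auto
  show ?thesis by (subst eq) simp
qed
lemma sum_delta_r: fixes c b :: "nat \<Rightarrow> complex" shows "(\<Sum>j<n. b j * (if j = i then c j else 0)) = (if i < n then b i * c i else 0)"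
proof -
  have eq: "(\<lambda>j. b j * (if j = i then c j else 0)) = (\<lambda>j. if i = j then b j * c j else 0)" by auto
  show ?thesis by (subst eq) simp
qed

lemma unit_vec_ip: fixes M :: "complex mat" assumes M: "M \<in> carrier_mat n n" and i: "i < n"
  shows "(M *\<^sub>v unit_vec n i) \<bullet>c unit_vec n i = M $$ (i,i)"
proof -
  have "(M *\<^sub>v unit_vec n i) \<bullet>c unit_vec n i = (\<Sum>a<n. (M *\<^sub>v unit_vec n i) $ a * (if a = i then 1 else 0))"
    by (subst ip_def'[of "unit_vec n i" n]) (auto simp: unit_vec_def intro!: sum.cong)
  also have "\<dots> = (M *\<^sub>v unit_vec n i) $ i" using i by (simp add: sum_delta_r)
  also have "\<dots> = (\<Sum>j<n. M $$ (i,j) * (if j = i then 1 else 0))" using M i by (simp add: mv_idx unit_vec_def)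
  also have "\<dots> = M $$ (i,i)" using i by (simp add: sum_delta_r)
  finally show ?thesis .
qed

lemma psd_diag: assumes "psd n M" "i < n"
  shows "M $$ (i,i) = complex_of_real (Re (M $$ (i,i))) \<and> 0 \<le> Re (M $$ (i,i))"
  using psd_form[OF assms(1) unit_vec_carrier[of n i]] unit_vec_ip[OF psd_carrier[OF assms(1)] assms(2)] by simp

lemma dmat_mult: "dmat n f * dmat n g = dmat n (\<lambda>i. f i * g i)"
  by (rule eq_matI) (auto simp: mult_idx if_distrib cong: if_cong)

lemma dmat_cong: "(\<And>i. i < n \<Longrightarrow> f i = g i) \<Longrightarrow> dmat n f = dmat n g"
  by (rule eq_matI) auto

lemma adj_dmat: "adj (dmat n f) = dmat n f"
  by (rule eq_matI) auto

lemma psd_dmat: assumes "\<And>i. i < n \<Longrightarrow> f i \<ge> 0" shows "psd n (dmat n f)"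
proof (rule psdI)
  fix v :: "complex vec" assume v: "v \<in> carrier_vec n"
  have "(dmat n f *\<^sub>v v) \<bullet>c v = (\<Sum>i<n. (\<Sum>j<n. (if i = j then complex_of_real (f i) else 0) * v $ j) * cnj (v $ i))"
    using v by (simp add: ip_def'[of v n] mv_idx)
  also have "\<dots> = (\<Sum>i<n. complex_of_real (f i * (cmod (v $ i))^2))"
    by (rule sum.cong[OF refl]) (simp add: sum_delta_l complex_norm_square mult.assoc del: of_real_power)
  also have "\<dots> = complex_of_real (\<Sum>i<n. f i * (cmod (v $ i))^2)" by simp
  finally have e: "(dmat n f *\<^sub>v v) \<bullet>c v = complex_of_real (\<Sum>i<n. f i * (cmod (v $ i))^2)" .
  have "0 \<le> (\<Sum>i<n. f i * (cmod (v $ i))^2)" using assms by (intro sum_nonneg) simp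
  thus "Im ((dmat n f *\<^sub>v v) \<bullet>c v) = 0 \<and> 0 \<le> Re ((dmat n f *\<^sub>v v) \<bullet>c v)" unfolding e by simp
qed (auto simp: adj_dmat)

lemma one_dmat: "1\<^sub>m n = dmat n (\<lambda>_. 1)"
  by (rule eq_matI) auto

lemma psd_AAadj: assumes "A \<in> carrier_mat n m" shows "psd n (A * adj A)"
proof -
  have "psd n (A * 1\<^sub>m m * adj A)"
    by (rule psd_congr[OF _ assms]) (simp add: one_dmat psd_dmat)
  thus ?thesis using assms by simp
qed

lemma uuX: "U \<in> carrier_mat n n \<Longrightarrow> adj U * U = 1\<^sub>m n \<Longrightarrow> X \<in> carrier_mat n m \<Longrightarrow> adj U * (U * X) = X"
  by (simp add: assoc_mult_mat[symmetric, of "adj U" n n U n X m])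

lemma unit_conj_mult:
  assumes U: "U \<in> carrier_mat n n" "adj U * U = 1\<^sub>m n" and B: "B \<in> carrier_mat n n" and C: "C \<in> carrier_mat n n"
  shows "U * B * adj U * (U * C * adj U) = U * (B * C) * adj U"
proof -
  have 1: "adj U * (U * (C * adj U)) = C * adj U" by (rule uuX) (use U C in auto)
  show ?thesis using U B C by (simp add: assoc_mult_mat[of _ n n _ n _ n] 1)
qed

lemma unit_conj_back:
  assumes U: "U \<in> carrier_mat n n" "adj U * U = 1\<^sub>m n" and B: "B \<in> carrier_mat n n"
  shows "adj U * (U * B * adj U) * U = B"
proof -
  show ?thesis using U B by (simp add: assoc_mult_mat[of _ n n _ n _ n] uuX)
qed

lemma psd_spectral: assumes A: "psd n A"
  shows "\<exists>U lam. U \<in> carrier_mat n n \<and> adj U * U = 1\<^sub>m n \<and> U * adj U = 1\<^sub>m n \<and>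
     A = U * dmat n lam * adj U \<and> (\<forall>i<n. lam i \<ge> 0)"
proof -
  obtain U lam where U: "U \<in> carrier_mat n n" "adj U * U = 1\<^sub>m n" "U * adj U = 1\<^sub>m n"
    and Ad: "A = U * dmat n lam * adj U"
    using spectral[OF psd_carrier[OF A] psd_herm[OF A]] by blast
  have "psd n (adj U * A * adj (adj U))" by (rule psd_congr[OF A]) (use U in auto)
  hence p: "psd n (dmat n lam)" using unit_conj_back[OF U(1,2) dmat_carrier] Ad by simp
  have "lam i \<ge> 0" if "i < n" for i using psd_diag[OF p that] that by simp
  thus ?thesis using U Ad by blast
qed

lemma psd_sqrt_ex: assumes A: "psd n A" shows "\<exists>B. psd n B \<and> B * B = A"
proof -
  obtain U lam where U: "U \<in> carrier_mat n n" "adj U * U = 1\<^sub>m n" "U * adj U = 1\<^sub>m n"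
    and Ad: "A = U * dmat n lam * adj U" and l: "\<forall>i<n. lam i \<ge> 0"
    using psd_spectral[OF A] by blast
  define B where "B = U * dmat n (\<lambda>i. sqrt (lam i)) * adj U"
  have "psd n (dmat n (\<lambda>i. sqrt (lam i)))" using l by (intro psd_dmat) auto
  hence "psd n B" unfolding B_def using U by (intro psd_congr) auto
  moreover have "B * B = A" unfolding B_def Ad
    using l by (simp add: unit_conj_mult[OF U(1,2)] dmat_mult dmat_cong[of n "\<lambda>i. \<bar>lam i\<bar>" lam])
  ultimately show ?thesis by blast
qed

lemma psd_zero_form: assumes B: "psd n B" and x: "x \<in> carrier_vec n" and z: "(B *\<^sub>v x) \<bullet>c x = 0"
  shows "B *\<^sub>v x = 0\<^sub>v n"
proof -
  obtain K where K: "psd n K" and KK: "K * K = B" using psd_sqrt_ex[OF B] by blast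
  have Kc: "K \<in> carrier_mat n n" using psd_carrier[OF K] .
  have Kx: "K *\<^sub>v x \<in> carrier_vec n" using Kc x by simp
  have "(B *\<^sub>v x) \<bullet>c x = (K *\<^sub>v (K *\<^sub>v x)) \<bullet>c x" using Kc x by (simp add: KK[symmetric] assoc_mult_mat_vec[of _ n n _ n])
  also have "\<dots> = (K *\<^sub>v x) \<bullet>c (adj K *\<^sub>v x)" by (rule ip_adj[OF Kc Kx x])
  also have "\<dots> = (K *\<^sub>v x) \<bullet>c (K *\<^sub>v x)" using psd_herm[OF K] by simp
  finally have "K *\<^sub>v x = 0\<^sub>v n" using ip_self_zero[OF Kx] z by simp
  hence "K *\<^sub>v (K *\<^sub>v x) = 0\<^sub>v n" using Kc by (intro eq_vecI) (auto simp: mv_idx)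
  thus ?thesis using Kc x by (simp add: KK[symmetric] assoc_mult_mat_vec[of _ n n _ n])
qed

lemma herm_eig_real: assumes A: "A \<in> carrier_mat n n" and h: "adj A = A"
  and x: "x \<in> carrier_vec n" and x0: "x \<noteq> 0\<^sub>v n" and Ax: "A *\<^sub>v x = \<mu> \<cdot>\<^sub>v x"
  shows "Im \<mu> = 0"
proof -
  have ww: "x \<bullet>c x \<noteq> 0" using ip_self_zero[OF x] x0 by auto
  have "\<mu> * (x \<bullet>c x) = (A *\<^sub>v x) \<bullet>c x" using Ax x by (simp add: ip_smult_left)
  also have "\<dots> = x \<bullet>c (A *\<^sub>v x)" using ip_adj[OF A x x] h by simp
  also have "\<dots> = cnj \<mu> * (x \<bullet>c x)" using Ax x by (simp add: ip_smult_right)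
  finally have "\<mu> = cnj \<mu>" using ww by simp
  thus ?thesis by (metis cnj.simps(2) neg_equal_zero)
qed

lemma psd_sqrt_unique: assumes B: "psd n B" and C: "psd n C" and BC: "B * B = C * C"
  shows "B = C"
proof -
  have Bc: "B \<in> carrier_mat n n" and Cc: "C \<in> carrier_mat n n" using psd_carrier B C by auto
  define H where "H = B - C"
  have Hc: "H \<in> carrier_mat n n" unfolding H_def using Bc Cc by (auto simp: minus_carrier_mat)
  have hH: "adj H = H" unfolding H_def using Bc Cc psd_herm[OF B] psd_herm[OF C] by (simp add: adj_minus)
  have ev0: "\<mu> = 0" if ev: "eigenvalue H \<mu>" for \<mu>
  proof (rule ccontr)
    assume mu0: "\<mu> \<noteq> 0"
    obtain x where x: "x \<in> carrier_vec n" and x0: "x \<noteq> 0\<^sub>v n" and Hx: "H *\<^sub>v x = \<mu> \<cdot>\<^sub>v x"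
      using ev Hc unfolding eigenvalue_def eigenvector_def by auto
    have imu: "Im \<mu> = 0" by (rule herm_eig_real[OF Hc hH x x0 Hx])
    define b where "b = B *\<^sub>v x"
    define c where "c = C *\<^sub>v x"
    have bc: "b \<in> carrier_vec n" "c \<in> carrier_vec n" unfolding b_def c_def using Bc Cc x by auto
    have bmc: "b - c = \<mu> \<cdot>\<^sub>v x" using Hx unfolding H_def b_def c_def
      using Bc Cc x by (simp add: minus_mult_distrib_mat_vec)
    obtain qB where qB: "b \<bullet>c x = complex_of_real qB" "qB \<ge> 0"
      using psd_form[OF B x] unfolding b_def by metis
    obtain qC where qC: "c \<bullet>c x = complex_of_real qC" "qC \<ge> 0"
      using psd_form[OF C x] unfolding c_def by metis
    have xb: "x \<bullet>c b = complex_of_real qB" using ip_cnj[OF bc(1) x] qB by simp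
    have xc: "x \<bullet>c c = complex_of_real qC" using ip_cnj[OF bc(2) x] qC by simp
    have bb: "b \<bullet>c b = (B *\<^sub>v b) \<bullet>c x"
      using ip_adj[OF Bc bc(1) x] psd_herm[OF B] unfolding b_def by simp
    have cc: "c \<bullet>c c = (C *\<^sub>v c) \<bullet>c x"
      using ip_adj[OF Cc bc(2) x] psd_herm[OF C] unfolding c_def by simp
    have "B *\<^sub>v b = C *\<^sub>v c" unfolding b_def c_def
      using BC Bc Cc x by (metis assoc_mult_mat_vec)
    hence bbcc: "b \<bullet>c b = c \<bullet>c c" using bb cc by simp
    have e1: "\<mu> * (x \<bullet>c b) = b \<bullet>c b - c \<bullet>c b"
      using bmc bc x by (metis ip_minus_left ip_smult_left)
    have e2: "\<mu> * (x \<bullet>c c) = b \<bullet>c c - c \<bullet>c c"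
      using bmc bc x by (metis ip_minus_left ip_smult_left)
    have cb: "c \<bullet>c b = cnj (b \<bullet>c c)" using ip_cnj[OF bc(1) bc(2)] .
    have "Re (\<mu> * (x \<bullet>c b) + \<mu> * (x \<bullet>c c)) = Re (b \<bullet>c c - cnj (b \<bullet>c c))"
      using e1 e2 bbcc cb by simp
    also have "\<dots> = 0" by simp
    finally have "Re \<mu> * (qB + qC) = 0" using xb xc imu by (simp add: algebra_simps)
    moreover have "Re \<mu> \<noteq> 0" using mu0 imu by (simp add: complex_eq_iff)
    ultimately have "qB + qC = 0" by simp
    hence "qB = 0" "qC = 0" using qB qC by auto
    hence "b = 0\<^sub>v n" "c = 0\<^sub>v n"
      using psd_zero_form[OF B x] psd_zero_form[OF C x] qB qC unfolding b_def c_def by auto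
    hence "\<mu> \<cdot>\<^sub>v x = 0\<^sub>v n" using bmc by simp
    hence "x = 0\<^sub>v n" using mu0 x
    proof (intro eq_vecI)
      fix i assume "\<mu> \<cdot>\<^sub>v x = 0\<^sub>v n" "i < dim_vec (0\<^sub>v n :: complex vec)"
      hence "\<mu> * x $ i = 0" using x by (metis index_smult_vec(1) index_zero_vec(1) index_zero_vec(2) carrier_vecD)
      thus "x $ i = 0\<^sub>v n $ i" using mu0 \<open>i < dim_vec (0\<^sub>v n :: complex vec)\<close> by simp
    qed auto
    thus False using x0 by simp
  qed
  have "H = 0\<^sub>m n n" by (rule herm_nilspec_zero[OF Hc hH ev0])
  show "B = C"
  proof (rule eq_matI)
    fix i j assume ij: "i < dim_row C" "j < dim_col C"
    have "H $$ (i,j) = 0" using \<open>H = 0\<^sub>m n n\<close> ij Cc by simp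
    thus "B $$ (i,j) = C $$ (i,j)" unfolding H_def using ij Bc Cc by simp
  qed (insert Bc Cc, auto)
qed

lemma msqrt: assumes A: "psd n A"
  shows "psd n (msqrt n A)" "msqrt n A * msqrt n A = A"
proof -
  have ex1: "\<exists>!B. psd n B \<and> B * B = A"
    using psd_sqrt_ex[OF A] psd_sqrt_unique by metis
  have "psd n (msqrt n A) \<and> msqrt n A * msqrt n A = A"
    unfolding msqrt_def by (rule theI'[OF ex1])
  thus "psd n (msqrt n A)" "msqrt n A * msqrt n A = A" by auto
qed

lemma psd_trace_nonneg: assumes "psd n M" shows "0 \<le> Re (mtrace M)"
proof -
  have "Re (mtrace M) = (\<Sum>i<n. Re (M $$ (i,i)))" using psd_carrier[OF assms] by (simp add: mtrace_def)
  also have "\<dots> \<ge> 0" using psd_diag[OF assms] by (intro sum_nonneg) auto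
  finally show ?thesis .
qed

lemma amgm: assumes S: "psd n S" and A: "A \<in> carrier_mat n m" and B: "B \<in> carrier_mat n m"
  shows "2 * Re (mtrace (adj A * S * B)) \<le> Re (mtrace (adj A * S * A)) + Re (mtrace (adj B * S * B))"
proof -
  have Sc: "S \<in> carrier_mat n n" using psd_carrier[OF S] .
  have hS: "adj S = S" using psd_herm[OF S] .
  have AB: "A - B \<in> carrier_mat n m" using A B by (auto simp: minus_carrier_mat)
  have "psd m (adj (A - B) * S * adj (adj (A - B)))" by (rule psd_congr[OF S]) (use AB in auto)
  hence p: "psd m (adj (A - B) * S * (A - B))" by simp
  have aA: "adj A \<in> carrier_mat m n" and aB: "adj B \<in> carrier_mat m n" using A B by auto
  have "adj (A - B) * S * (A - B) = (adj A - adj B) * S * (A - B)" using A B by (simp add: adj_minus)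
  also have "\<dots> = (adj A * S - adj B * S) * (A - B)"
    using aA aB Sc by (simp add: minus_mult_distrib_mat[of _ m n])
  also have "\<dots> = (adj A * S * A - adj A * S * B) - (adj B * S * A - adj B * S * B)"
  proof -
    have X: "adj A * S \<in> carrier_mat m n" "adj B * S \<in> carrier_mat m n" using aA aB Sc by auto
    have "(adj A * S - adj B * S) * (A - B) = adj A * S * (A - B) - adj B * S * (A - B)"
      by (rule minus_mult_distrib_mat[OF X AB])
    also have "adj A * S * (A - B) = adj A * S * A - adj A * S * B" by (rule mult_minus_distrib_mat[OF X(1) A B])
    also have "adj B * S * (A - B) = adj B * S * A - adj B * S * B" by (rule mult_minus_distrib_mat[OF X(2) A B])
    finally show ?thesis .
  qed
  finally have ex: "adj (A - B) * S * (A - B) = (adj A * S * A - adj A * S * B) - (adj B * S * A - adj B * S * B)" .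
  have c1: "adj A * S * A \<in> carrier_mat m m" "adj A * S * B \<in> carrier_mat m m"
    "adj B * S * A \<in> carrier_mat m m" "adj B * S * B \<in> carrier_mat m m" using aA aB Sc A B by auto
  have "mtrace (adj (A - B) * S * (A - B)) = mtrace (adj A * S * A) - mtrace (adj A * S * B)
      - mtrace (adj B * S * A) + mtrace (adj B * S * B)"
    unfolding ex using c1 by (simp add: mtrace_minus[of _ m] minus_carrier_mat)
  moreover have "mtrace (adj B * S * A) = cnj (mtrace (adj A * S * B))"
  proof -
    have "adj (adj A * S * B) = adj B * adj (adj A * S)" using aA Sc B by (intro adj_mult) auto
    also have "adj (adj A * S) = adj S * adj (adj A)" using aA Sc by (intro adj_mult) auto
    finally have "adj (adj A * S * B) = adj B * (S * A)" using hS by simp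
    also have "\<dots> = adj B * S * A" using aB Sc A by (simp add: assoc_mult_mat[of _ m n _ n _ m])
    finally have "adj B * S * A = adj (adj A * S * B)" by simp
    thus ?thesis using mtrace_adj[OF c1(2)] by simp
  qed
  ultimately have "Re (mtrace (adj (A - B) * S * (A - B))) =
     Re (mtrace (adj A * S * A)) - 2 * Re (mtrace (adj A * S * B)) + Re (mtrace (adj B * S * B))" by simp
  with psd_trace_nonneg[OF p] show ?thesis by simp
qed

lemma dmat_mult_left: assumes Y: "Y \<in> carrier_mat n m" and i: "i < n" and j: "j < m"
  shows "(dmat n f * Y) $$ (i,j) = complex_of_real (f i) * Y $$ (i,j)"
  using Y i j by (simp add: mult_idx sum_delta_l)

lemma factor:
  assumes R: "psd n R" and X: "X \<in> carrier_mat n m" and XX: "X * adj X = R * R"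
  shows "\<exists>T. T \<in> carrier_mat n m \<and> X = R * T \<and>
     (\<forall>S. psd n S \<longrightarrow> Re (mtrace (adj T * S * T)) \<le> Re (mtrace S))"
proof -
  obtain U lam where Uc: "U \<in> carrier_mat n n" and UU: "adj U * U = 1\<^sub>m n" and UU': "U * adj U = 1\<^sub>m n"
    and Rd: "R = U * dmat n lam * adj U" and l: "\<forall>i<n. lam i \<ge> 0"
    using psd_spectral[OF R] by blast
  note U = Uc UU
  define D where "D = dmat n lam"
  define Dp where "Dp = dmat n (\<lambda>i. if lam i = 0 then 0 else 1 / lam i)"
  define E where "E = dmat n (\<lambda>i. if lam i = 0 then 0 else 1)"
  have DDp: "D * Dp = E" unfolding D_def Dp_def E_def dmat_mult by (rule dmat_cong) auto
  have DpDDDp: "Dp * (D * D) * Dp = E" unfolding D_def Dp_def E_def dmat_mult by (rule dmat_cong) auto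
  have cD: "D \<in> carrier_mat n n" "Dp \<in> carrier_mat n n" "E \<in> carrier_mat n n"
    unfolding D_def Dp_def E_def by auto
  have aU: "adj U \<in> carrier_mat n n" using Uc by auto
  define Y where "Y = adj U * X"
  have Yc: "Y \<in> carrier_mat n m" unfolding Y_def using aU X by auto
  have RR: "R * R = U * (D * D) * adj U" unfolding Rd D_def by (rule unit_conj_mult[OF U]) auto
  have YY: "Y * adj Y = D * D"
  proof -
    have "adj Y = adj X * adj (adj U)" unfolding Y_def using aU X by (intro adj_mult) auto
    hence "Y * adj Y = adj U * X * (adj X * U)" unfolding Y_def by simp
    also have "\<dots> = adj U * (X * (adj X * U))" using aU X Uc by (intro assoc_mult_mat) auto
    also have "X * (adj X * U) = X * adj X * U" using X Uc by (intro assoc_mult_mat[symmetric]) auto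
    also have "adj U * (X * adj X * U) = adj U * (X * adj X) * U" using aU X Uc by (intro assoc_mult_mat[symmetric]) auto
    also have "\<dots> = D * D" unfolding XX RR using cD by (intro unit_conj_back[OF U]) auto
    finally show ?thesis .
  qed
  have Yz: "Y $$ (i,j) = 0" if i: "i < n" and j: "j < m" and li: "lam i = 0" for i j
  proof -
    have "(Y * adj Y) $$ (i,i) = 0" unfolding YY D_def dmat_mult using i li by simp
    hence "(\<Sum>k<m. Y $$ (i,k) * cnj (Y $$ (i,k))) = 0" using i Yc by (simp add: mult_idx)
    hence "complex_of_real (\<Sum>k<m. (cmod (Y $$ (i,k)))^2) = 0" by (simp add: complex_norm_square del: of_real_power)
    hence "(\<Sum>k<m. (cmod (Y $$ (i,k)))^2) = 0" by (simp only: of_real_eq_0_iff)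
    hence "(cmod (Y $$ (i,j)))^2 = 0" using j by (simp add: sum_nonneg_eq_0_iff)
    thus ?thesis by simp
  qed
  have EY: "E * Y = Y"
  proof (rule eq_matI)
    fix i j assume ij: "i < dim_row Y" "j < dim_col Y"
    thus "(E * Y) $$ (i,j) = Y $$ (i,j)" unfolding E_def using Yc Yz
      by (subst dmat_mult_left[OF Yc]) auto
  qed (insert Yc cD, auto)
  define T where "T = U * Dp * adj U * X"
  have Tc: "T \<in> carrier_mat n m" unfolding T_def using Uc cD X by auto
  have RT: "X = R * T"
  proof -
    have "R * T = (U * D * adj U) * ((U * Dp * adj U) * X)" unfolding T_def Rd D_def by simp
    also have "\<dots> = (U * D * adj U * (U * Dp * adj U)) * X"
      by (rule assoc_mult_mat[symmetric]) (use Uc cD X in auto)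
    also have "U * D * adj U * (U * Dp * adj U) = U * E * adj U"
      using unit_conj_mult[OF U, of D Dp] cD DDp by simp
    also have "U * E * adj U * X = U * (E * Y)" unfolding Y_def
      using Uc cD X by (simp add: assoc_mult_mat[of _ n n _ n _ m] assoc_mult_mat[of _ n n _ n _ n])
    also have "\<dots> = U * Y" using EY by simp
    also have "\<dots> = X" unfolding Y_def using Uc aU X UU'
      by (simp add: assoc_mult_mat[symmetric, of U n n "adj U" n X m])
    finally show ?thesis by simp
  qed
  have TT: "T * adj T = U * E * adj U"
  proof -
    have "adj T = adj X * adj (U * Dp * adj U)" unfolding T_def using Uc cD X by (intro adj_mult) auto
    also have "adj (U * Dp * adj U) = U * Dp * adj U"
    proof -
      have "adj (U * Dp * adj U) = adj (adj U) * adj (U * Dp)" using Uc cD by (intro adj_mult) auto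
      also have "adj (U * Dp) = adj Dp * adj U" using Uc cD by (intro adj_mult) auto
      finally show ?thesis using Uc cD by (simp add: Dp_def adj_dmat assoc_mult_mat[of _ n n _ n _ n])
    qed
    finally have aT: "adj T = adj X * (U * Dp * adj U)" .
    define K2 where "K2 = U * Dp * adj U"
    have K2c: "K2 \<in> carrier_mat n n" unfolding K2_def using Uc cD by auto
    have "T * adj T = K2 * X * (adj X * K2)" unfolding aT K2_def[symmetric] unfolding K2_def T_def ..
    also have "\<dots> = K2 * (X * (adj X * K2))" by (rule assoc_mult_mat) (use K2c X in auto)
    also have "X * (adj X * K2) = X * adj X * K2" by (rule assoc_mult_mat[symmetric]) (use K2c X in auto)
    also have "K2 * (X * adj X * K2) = K2 * (X * adj X) * K2" by (rule assoc_mult_mat[symmetric]) (use K2c X in auto)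
    finally have "T * adj T = U * Dp * adj U * (X * adj X) * (U * Dp * adj U)" unfolding K2_def .
    also have "\<dots> = U * Dp * adj U * (U * (D * D) * adj U) * (U * Dp * adj U)" unfolding XX RR ..
    also have "\<dots> = U * (Dp * (D * D)) * adj U * (U * Dp * adj U)"
      using unit_conj_mult[OF U, of Dp "D * D"] cD by simp
    also have "\<dots> = U * (Dp * (D * D) * Dp) * adj U"
      using unit_conj_mult[OF U, of "Dp * (D * D)" Dp] cD by simp
    also have "\<dots> = U * E * adj U" using DpDDDp by simp
    finally show ?thesis .
  qed
  have tr: "Re (mtrace (adj T * S * T)) \<le> Re (mtrace S)" if S: "psd n S" for S
  proof -
    have Sc: "S \<in> carrier_mat n n" using psd_carrier[OF S] .
    define G where "G = adj U * S * U"
    have Gc: "G \<in> carrier_mat n n" unfolding G_def using Sc Uc by auto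
    have pG: "psd n G" unfolding G_def using psd_congr[OF S aU] by simp
    have "mtrace (adj T * S * T) = mtrace (T * (adj T * S))"
      using Tc Sc by (intro mtrace_comm[of _ m n]) auto
    also have "T * (adj T * S) = U * E * adj U * S"
      using Tc Sc TT by (simp add: assoc_mult_mat[symmetric, of T n m "adj T" n S n])
    also have "mtrace (U * E * adj U * S) = mtrace (U * (E * adj U * S))"
      using Uc cD Sc by (simp add: assoc_mult_mat[of _ n n _ n _ n])
    also have "\<dots> = mtrace (E * adj U * S * U)"
      using Uc cD Sc by (intro mtrace_comm[of _ n n]) auto
    also have "E * adj U * S * U = E * G"
    proof -
      have "E * G = E * (adj U * S) * U" unfolding G_def by (rule assoc_mult_mat[symmetric]) (use Uc cD Sc in auto)
      also have "E * (adj U * S) = E * adj U * S" by (rule assoc_mult_mat[symmetric]) (use Uc cD Sc in auto)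
      finally show ?thesis by simp
    qed
    also have "mtrace (E * G) = (\<Sum>i<n. (if lam i = 0 then 0 else 1) * G $$ (i,i))"
      unfolding mtrace_def E_def using Gc by (simp add: dmat_mult_left[OF Gc]) (rule sum.cong, auto)
    finally have e: "Re (mtrace (adj T * S * T)) = (\<Sum>i<n. Re ((if lam i = 0 then 0 else 1) * G $$ (i,i)))" by simp
    also have "\<dots> \<le> (\<Sum>i<n. Re (G $$ (i,i)))"
      using psd_diag[OF pG] by (intro sum_mono) auto
    also have "\<dots> = Re (mtrace G)" using Gc by (simp add: mtrace_def)
    also have "mtrace G = mtrace (adj U * (S * U))" unfolding G_def using Uc Sc by (simp add: assoc_mult_mat[of _ n n _ n _ n])
    also have "\<dots> = mtrace (S * U * adj U)" by (rule mtrace_comm) (use Uc Sc in auto)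
    also have "S * U * adj U = S" using Uc Sc UU' by (simp add: assoc_mult_mat[of _ n n _ n _ n])
    finally show ?thesis .
  qed
  show ?thesis using Tc RT tr by blast
qed

lemma fid_bound:
  assumes X: "X \<in> carrier_mat n m" and Y: "Y \<in> carrier_mat n m"
  shows "Re (mtrace (adj Y * X)) \<le>
    Re (mtrace (msqrt n (msqrt n (X * adj X) * (Y * adj Y) * msqrt n (X * adj X))))"
proof -
  define R where "R = msqrt n (X * adj X)"
  have pXX: "psd n (X * adj X)" by (rule psd_AAadj[OF X])
  have pR: "psd n R" and RR: "R * R = X * adj X" unfolding R_def using msqrt[OF pXX] by auto
  have Rc: "R \<in> carrier_mat n n" using psd_carrier[OF pR] .
  have hR: "adj R = R" using psd_herm[OF pR] .
  obtain T where Tc: "T \<in> carrier_mat n m" and XRT: "X = R * T"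
    and Tb: "\<And>S. psd n S \<Longrightarrow> Re (mtrace (adj T * S * T)) \<le> Re (mtrace S)"
    using factor[OF pR X RR[symmetric]] by blast
  define Z where "Z = R * Y"
  have Zc: "Z \<in> carrier_mat n m" unfolding Z_def using Rc Y by auto
  have aZ: "adj Z = adj Y * R" unfolding Z_def using Rc Y hR by (simp add: adj_mult[of _ n n _ m])
  have ZZ: "Z * adj Z = R * (Y * adj Y) * R"
  proof -
    have "Z * adj Z = R * Y * (adj Y * R)" by (subst aZ) (simp add: Z_def)
    also have "\<dots> = R * (Y * (adj Y * R))" by (rule assoc_mult_mat) (use Rc Y in auto)
    also have "Y * (adj Y * R) = Y * adj Y * R" by (rule assoc_mult_mat[symmetric]) (use Rc Y in auto)
    also have "R * (Y * adj Y * R) = R * (Y * adj Y) * R" by (rule assoc_mult_mat[symmetric]) (use Rc Y in auto)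
    finally show ?thesis .
  qed
  define S where "S = msqrt n (R * (Y * adj Y) * R)"
  have pM: "psd n (R * (Y * adj Y) * R)" unfolding ZZ[symmetric] by (rule psd_AAadj[OF Zc])
  have pS: "psd n S" and SS: "S * S = R * (Y * adj Y) * R" unfolding S_def using msqrt[OF pM] by auto
  have Sc: "S \<in> carrier_mat n n" using psd_carrier[OF pS] .
  have hS: "adj S = S" using psd_herm[OF pS] .
  obtain W where Wc: "W \<in> carrier_mat n m" and ZSW: "Z = S * W"
    and Wb: "\<And>S'. psd n S' \<Longrightarrow> Re (mtrace (adj W * S' * W)) \<le> Re (mtrace S')"
    using factor[OF pS Zc] ZZ SS by metis
  have "adj Y * X = adj Y * R * T"
    unfolding XRT by (rule assoc_mult_mat[symmetric]) (use Rc Y Tc in auto)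
  also have "adj Y * R = adj Z" using aZ by simp
  also have "adj Z = adj W * S" unfolding ZSW using Sc Wc hS by (simp add: adj_mult[of _ n n _ m])
  finally have eq: "adj Y * X = adj W * S * T" .
  have "2 * Re (mtrace (adj W * S * T)) \<le> Re (mtrace (adj W * S * W)) + Re (mtrace (adj T * S * T))"
    by (rule amgm[OF pS Wc Tc])
  also have "\<dots> \<le> Re (mtrace S) + Re (mtrace S)" using Wb[OF pS] Tb[OF pS] by simp
  finally have "Re (mtrace (adj Y * X)) \<le> Re (mtrace S)" unfolding eq by simp
  thus ?thesis unfolding S_def R_def .
qed

lemma sum_lessThan_plus: fixes f :: "nat \<Rightarrow> 'a::comm_monoid_add"
  shows "(\<Sum>r<m + e. f r) = (\<Sum>r<m. f r) + (\<Sum>b<e. f (m+b))"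
  by (induction e) (simp_all add: add.assoc)

lemma sum_pair: fixes f :: "nat \<Rightarrow> 'a::comm_monoid_add"
  shows "(\<Sum>r<d*e. f r) = (\<Sum>a<d. \<Sum>b<e. f (a*e+b))"
proof (induction d)
  case 0 then show ?case by simp
next
  case (Suc d)
  have "(\<Sum>r<Suc d * e. f r) = (\<Sum>r<d*e + e. f r)" by (simp add: add.commute)
  also have "\<dots> = (\<Sum>r<d*e. f r) + (\<Sum>b<e. f (d*e+b))" by (rule sum_lessThan_plus)
  finally show ?case using Suc by simp
qed

lemma idx_lt: "i < d \<Longrightarrow> l < (d::nat) \<Longrightarrow> i * d + l < d * d"
proof -
  assume "i < d" "l < d"
  hence "i * d + l < i * d + d" by simp
  also have "\<dots> = (i + 1) * d" by simp
  also have "\<dots> \<le> d * d" using \<open>i < d\<close> by (intro mult_right_mono) auto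
  finally show ?thesis .
qed

lemma sum_divmod: fixes g :: "nat \<Rightarrow> nat \<Rightarrow> 'a::comm_monoid_add" assumes d: "0 < d"
  shows "(\<Sum>c<D*d. g (c div d) (c mod d)) = (\<Sum>k<D. \<Sum>l<d. g k l)"
  by (subst sum_pair) (rule sum.cong[OF refl], rule sum.cong[OF refl], use d in simp)

lemma sum_delta2: fixes f :: "nat \<Rightarrow> nat \<Rightarrow> complex" assumes "x < d" "y < d"
  shows "(\<Sum>a'<d. \<Sum>b'<d. (if x = b' \<and> y = a' then 1 else 0) * f a' b') = f y x"
proof -
  have i: "(\<Sum>b'<d. (if x = b' \<and> y = a' then 1 else 0) * f a' b') = (if y = a' then f a' x else 0)" for a'
  proof -
    have "(\<Sum>b'<d. (if x = b' \<and> y = a' then 1 else 0) * f a' b') =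
      (\<Sum>b'<d. if x = b' then (if y = a' then f a' b' else 0) else 0)"
      by (intro sum.cong refl) auto
    also have "\<dots> = (if y = a' then f a' x else 0)" using assms by simp
    finally show ?thesis .
  qed
  show ?thesis unfolding i using assms by simp
qed

lemma tr_mult: "A \<in> carrier_mat n m \<Longrightarrow> B \<in> carrier_mat m n \<Longrightarrow>
  mtrace (A * B) = (\<Sum>r<n. \<Sum>c<m. A $$ (r,c) * B $$ (c,r))"
  by (simp add: mtrace_def mult_idx)

theorem lemma4p3:
  fixes d :: nat and \<rho> :: "complex mat"
  assumes "density_op (d * d) \<rho>"
  shows "swap_test_antisym_prob d \<rho> \<ge> 1 / 2 - 1 / 2 * fidelity d (ptrace_A d \<rho>) (ptrace_B d \<rho>)"
proof -
  define N where "N = d * d"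
  have pr: "psd N \<rho>" and tr1: "mtrace \<rho> = 1" using assms unfolding density_op_def N_def by auto
  have rc: "\<rho> \<in> carrier_mat N N" using psd_carrier[OF pr] .
  have dpos: "0 < d"
  proof (rule ccontr)
    assume "\<not> 0 < d"
    hence "N = 0" unfolding N_def by simp
    hence "mtrace \<rho> = 0" using rc by (simp add: mtrace_def)
    thus False using tr1 by simp
  qed
  define K where "K = msqrt N \<rho>"
  have pK: "psd N K" and KK: "K * K = \<rho>" unfolding K_def using msqrt[OF pr] by auto
  have Kc: "K \<in> carrier_mat N N" using psd_carrier[OF pK] .
  have rK: "\<rho> $$ (a,b) = (\<Sum>k<N. K $$ (a,k) * cnj (K $$ (b,k)))" if "a < N" "b < N" for a b
  proof -
    have "\<rho> = K * adj K" using KK psd_herm[OF pK] by simp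
    thus ?thesis using that Kc by (simp add: mult_idx)
  qed
  have il: "i * d + l < N" if "i < d" "l < d" for i l unfolding N_def using idx_lt that .
  define X where "X = mat d (N*d) (\<lambda>(i,c). K $$ (i*d + c mod d, c div d))"
  define Y where "Y = mat d (N*d) (\<lambda>(i,c). K $$ ((c mod d)*d + i, c div d))"
  have Xc: "X \<in> carrier_mat d (N*d)" and Yc: "Y \<in> carrier_mat d (N*d)" unfolding X_def Y_def by auto
  have XX: "X * adj X = ptrace_B d \<rho>"
  proof (rule eq_matI)
    fix i j assume ij: "i < dim_row (ptrace_B d \<rho>)" "j < dim_col (ptrace_B d \<rho>)"
    hence ij: "i < d" "j < d" by (auto simp: ptrace_B_def)
    have "(X * adj X) $$ (i,j) = (\<Sum>c<N*d. K $$ (i*d + c mod d, c div d) * cnj (K $$ (j*d + c mod d, c div d)))"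
      using ij Xc by (simp add: mult_idx X_def)
    also have "\<dots> = (\<Sum>k<N. \<Sum>l<d. K $$ (i*d + l, k) * cnj (K $$ (j*d + l, k)))"
      by (rule sum_divmod[OF dpos])
    also have "\<dots> = (\<Sum>l<d. \<Sum>k<N. K $$ (i*d + l, k) * cnj (K $$ (j*d + l, k)))" by (rule sum.swap)
    also have "\<dots> = (\<Sum>l<d. \<rho> $$ (i*d + l, j*d + l))"
      using ij il by (intro sum.cong refl) (simp add: rK)
    also have "\<dots> = ptrace_B d \<rho> $$ (i,j)" using ij by (simp add: ptrace_B_def)
    finally show "(X * adj X) $$ (i,j) = ptrace_B d \<rho> $$ (i,j)" .
  qed (insert Xc, auto simp: ptrace_B_def)
  have YY: "Y * adj Y = ptrace_A d \<rho>"
  proof (rule eq_matI)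
    fix i j assume ij: "i < dim_row (ptrace_A d \<rho>)" "j < dim_col (ptrace_A d \<rho>)"
    hence ij: "i < d" "j < d" by (auto simp: ptrace_A_def)
    have "(Y * adj Y) $$ (i,j) = (\<Sum>c<N*d. K $$ ((c mod d)*d + i, c div d) * cnj (K $$ ((c mod d)*d + j, c div d)))"
      using ij Yc by (simp add: mult_idx Y_def)
    also have "\<dots> = (\<Sum>k<N. \<Sum>l<d. K $$ (l*d + i, k) * cnj (K $$ (l*d + j, k)))"
      by (rule sum_divmod[OF dpos])
    also have "\<dots> = (\<Sum>l<d. \<Sum>k<N. K $$ (l*d + i, k) * cnj (K $$ (l*d + j, k)))" by (rule sum.swap)
    also have "\<dots> = (\<Sum>l<d. \<rho> $$ (l*d + i, l*d + j))"
      using ij il by (intro sum.cong refl) (simp add: rK)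
    also have "\<dots> = ptrace_A d \<rho> $$ (i,j)" using ij by (simp add: ptrace_A_def)
    finally show "(Y * adj Y) $$ (i,j) = ptrace_A d \<rho> $$ (i,j)" .
  qed (insert Yc, auto simp: ptrace_A_def)
  define tW where "tW = (\<Sum>i<d. \<Sum>l<d. \<rho> $$ (l*d + i, i*d + l))"
  have trXY: "mtrace (adj X * Y) = tW"
  proof -
    have "mtrace (adj X * Y) = (\<Sum>c<N*d. \<Sum>i<d. cnj (K $$ (i*d + c mod d, c div d)) * K $$ ((c mod d)*d + i, c div d))"
      using Xc Yc by (simp add: tr_mult[of _ "N*d" d] X_def Y_def)
    also have "\<dots> = (\<Sum>k<N. \<Sum>l<d. \<Sum>i<d. cnj (K $$ (i*d + l, k)) * K $$ (l*d + i, k))"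
      by (rule sum_divmod[OF dpos])
    also have "\<dots> = (\<Sum>i<d. \<Sum>l<d. \<Sum>k<N. K $$ (l*d + i, k) * cnj (K $$ (i*d + l, k)))"
    proof -
      have "(\<Sum>k<N. \<Sum>l<d. \<Sum>i<d. cnj (K $$ (i*d + l, k)) * K $$ (l*d + i, k))
          = (\<Sum>l<d. \<Sum>k<N. \<Sum>i<d. cnj (K $$ (i*d + l, k)) * K $$ (l*d + i, k))" by (rule sum.swap)
      also have "\<dots> = (\<Sum>l<d. \<Sum>i<d. \<Sum>k<N. cnj (K $$ (i*d + l, k)) * K $$ (l*d + i, k))"
        by (rule sum.cong[OF refl], rule sum.swap)
      also have "\<dots> = (\<Sum>i<d. \<Sum>l<d. \<Sum>k<N. cnj (K $$ (i*d + l, k)) * K $$ (l*d + i, k))" by (rule sum.swap)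
      also have "\<dots> = (\<Sum>i<d. \<Sum>l<d. \<Sum>k<N. K $$ (l*d + i, k) * cnj (K $$ (i*d + l, k)))"
        by (simp add: mult.commute)
      finally show ?thesis .
    qed
    also have "\<dots> = tW" unfolding tW_def
      using il by (intro sum.cong refl) (simp add: rK)
    finally show ?thesis .
  qed
  have Wc: "swap_op d \<in> carrier_mat N N" unfolding swap_op_def N_def by simp
  have trW: "mtrace (swap_op d * \<rho>) = tW"
  proof -
    have "mtrace (swap_op d * \<rho>) = (\<Sum>r<N. \<Sum>c<N. swap_op d $$ (r,c) * \<rho> $$ (c,r))"
      by (rule tr_mult[OF Wc rc])
    also have "\<dots> = (\<Sum>a<d. \<Sum>b<d. \<Sum>a'<d. \<Sum>b'<d.
        (if a = b' \<and> b = a' then 1 else 0) * \<rho> $$ (a'*d+b', a*d+b))"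
    proof -
      have "(\<Sum>r<d*d. \<Sum>c<d*d. swap_op d $$ (r,c) * \<rho> $$ (c,r)) =
         (\<Sum>a<d. \<Sum>b<d. \<Sum>a'<d. \<Sum>b'<d. swap_op d $$ (a*d+b, a'*d+b') * \<rho> $$ (a'*d+b', a*d+b))"
        by (simp only: sum_pair)
      also have "\<dots> = (\<Sum>a<d. \<Sum>b<d. \<Sum>a'<d. \<Sum>b'<d.
        (if a = b' \<and> b = a' then 1 else 0) * \<rho> $$ (a'*d+b', a*d+b))"
        using idx_lt by (intro sum.cong refl) (simp add: swap_op_def)
      finally show ?thesis unfolding N_def .
    qed
    also have "\<dots> = (\<Sum>a<d. \<Sum>b<d. \<rho> $$ (b*d+a, a*d+b))"
      by (intro sum.cong refl) (simp add: sum_delta2)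
    also have "\<dots> = tW" unfolding tW_def ..
    finally show ?thesis .
  qed
  have prob: "swap_test_antisym_prob d \<rho> = 1/2 - 1/2 * Re tW"
  proof -
    have "mtrace ((1 / 2 :: complex) \<cdot>\<^sub>m (1\<^sub>m N - swap_op d) * \<rho>) =
        (\<Sum>r<N. \<Sum>c<N. ((1/2) * ((if r = c then 1 else 0) - swap_op d $$ (r,c))) * \<rho> $$ (c,r))"
    proof -
      have ent: "((1 / 2 :: complex) \<cdot>\<^sub>m (1\<^sub>m N - swap_op d)) $$ (r,c) = (1/2) * ((if r = c then 1 else 0) - swap_op d $$ (r,c))"
        if "r < N" "c < N" for r c using that Wc by simp
      have "mtrace ((1 / 2 :: complex) \<cdot>\<^sub>m (1\<^sub>m N - swap_op d) * \<rho>) =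
        (\<Sum>r<N. \<Sum>c<N. ((1 / 2 :: complex) \<cdot>\<^sub>m (1\<^sub>m N - swap_op d)) $$ (r,c) * \<rho> $$ (c,r))"
        by (rule tr_mult) (use Wc rc in auto)
      also have "\<dots> = (\<Sum>r<N. \<Sum>c<N. ((1/2) * ((if r = c then 1 else 0) - swap_op d $$ (r,c))) * \<rho> $$ (c,r))"
        by (intro sum.cong refl) (simp only: ent lessThan_iff)
      finally show ?thesis .
    qed
    also have "\<dots> = (1/2) * (\<Sum>r<N. \<Sum>c<N. (if r = c then 1 else 0) * \<rho> $$ (c,r))
        - (1/2) * (\<Sum>r<N. \<Sum>c<N. swap_op d $$ (r,c) * \<rho> $$ (c,r))"
    proof -
      have e: "((1/2) * ((if r = c then 1 else 0) - swap_op d $$ (r,c))) * \<rho> $$ (c,r)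
         = (1/2) * ((if r = c then 1 else 0) * \<rho> $$ (c,r)) - (1/2) * (swap_op d $$ (r,c) * \<rho> $$ (c,r))" for r c :: nat
        by (simp add: algebra_simps)
      show ?thesis unfolding e by (simp only: sum_subtractf sum_distrib_left)
    qed
    also have "(\<Sum>r<N. \<Sum>c<N. (if r = c then 1 else 0) * \<rho> $$ (c,r)) = mtrace \<rho>"
      using rc by (simp add: mtrace_def sum_delta_l)
    also have "(\<Sum>r<N. \<Sum>c<N. swap_op d $$ (r,c) * \<rho> $$ (c,r)) = tW"
      using trW tr_mult[OF Wc rc] by simp
    finally show ?thesis unfolding swap_test_antisym_prob_def N_def[symmetric] using tr1 by simp
  qed
  have "Re (mtrace (adj X * Y)) \<le> fidelity d (ptrace_A d \<rho>) (ptrace_B d \<rho>)"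
    using fid_bound[OF Yc Xc] unfolding fidelity_def XX YY .
  thus ?thesis unfolding prob using trXY by simp
qed

end
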